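(* Let $\mathcal Q=(\mathcal G,\mathcal C)$ be a CWS code in standard form with $K=|\mathcal C|\ge2$ and distance $d$. Let $(\mathcal G',\mathcal C')$ be any CWS code in standard form that is LC-equivalent to $\mathcal Q$ (in particular $(\mathcal G',\mathcal C')=(\mathcal G,\mathcal C)$ is allowed), and let $S'_i=X_iZ^{\mathbf r'_i}$ be the graph-stabilizer generators of $\mathcal G'$. Then $d$ is at most the $d$-th largest of the numbers $\mathrm{wgt}(S'_1),\dots,\mathrm{wgt}(S'_n)$ (where $\mathrm{wgt}(S'_i)=1+\deg_{\mathcal G'}(i)$). In other words, $d$ is bounded by the $d$-th largest weight of the $S_i$, minimized over all such graphs $\mathcal G'$ (which range over graphs locally equivalent to $\mathcal G$).
   Context: A Pauli operator on $n$ qubits is, up to a phase, $X^{\mathbf v}Z^{\mathbf u}=X_1^{v_1}\cdots X_n^{v_n}Z_1^{u_1}\cdots Z_n^{u_n}$ with $\mathbf v,\mathbf u\in\{0,1\}^n$; its weight is the number of qubits on which it acts as a non-identity operator. For a subspace $\mathcal Q\subseteq(\mathbb C^2)^{\otimes n}$ with orthonormal basis $\{|i\rangle\}$, a Pauli operator $E$ is detectable if $\langle j|E|i\rangle=C_E\delta_{ij}$ for all $i,j$, with $C_E$ independent of $i,j$; the distance of $\mathcal Q$ is the smallest weight of a non-detectable Pauli operator. Let $\mathcal G$ be a simple graph on vertex set $\{1,\dots,n\}$ with adjacency matrix $R\in\{0,1\}^{n\times n}$ (symmetric, zero diagonal) and rows $\mathbf r_i$. The graph-stabilizer generators are $S_i=X_iZ^{\mathbf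 r_i}$, $i=1,\dots,n$; they commute, generate an abelian group $\mathscr S_{\mathcal G}$, and stabilize a unique (up to phase) state $|s\rangle$, the graph state. For a binary code $\mathcal C\subseteq\{0,1\}^n$ with $K$ words, the CWS code in standard form is $\mathcal Q=(\mathcal G,\mathcal C)=\operatorname{span}\{Z^{\mathbf c}|s\rangle:\mathbf c\in\mathcal C\}$; it has dimension $K$. Two quantum codes are LC-equivalent if one is mapped onto the other by a qubit permutation followed by a tensor product of single-qubit Clifford unitaries; LC-equivalent codes have equal distance. Two graphs are locally equivalent if one is obtained from the other by a sequence of local complementations (replacing the subgraph induced on the neighbourhood of a vertex by its complement) and graph isomorphisms. *)

theory Defs
  imports Complex_Main
begin

text \<open>Qubits are indexed 0..n-1. A computational basis label is a bit string
  x :: nat => bool with x k = False for k >= n. A state of n qubits is a function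
  from bit strings to complex amplitudes (zero outside the basis labels).\<close>

type_synonym bits = "nat \<Rightarrow> bool"
type_synonym state = "bits \<Rightarrow> complex"

definition bitstrs :: "nat \<Rightarrow> bits set" where
  "bitstrs n = {x. \<forall>k\<ge>n. \<not> x k}"

definition bxor :: "bits \<Rightarrow> bits \<Rightarrow> bits" where
  "bxor x y = (\<lambda>k. x k \<noteq> y k)"

definition bdot :: "nat \<Rightarrow> bits \<Rightarrow> bits \<Rightarrow> nat" where
  "bdot n u x = card {k. k < n \<and> u k \<and> x k}"

definition unitv :: "nat \<Rightarrow> bits" where
  "unitv i = (\<lambda>k. k = i)"

definition zerov :: bits where
  "zerov = (\<lambda>k. False)"

definition qinner :: "nat \<Rightarrow> state \<Rightarrow> state \<Rightarrow> complex" where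
  "qinner n \<phi> \<psi> = (\<Sum>x\<in>bitstrs n. cnj (\<phi> x) * \<psi> x)"

text \<open>The Pauli operator X^v Z^u: X^v Z^u |y> = (-1)^(u.y) |y + v>.\<close>
definition pauli :: "nat \<Rightarrow> bits \<Rightarrow> bits \<Rightarrow> state \<Rightarrow> state" where
  "pauli n v u \<psi> = (\<lambda>x. (-1::complex) ^ bdot n u (bxor x v) * \<psi> (bxor x v))"

definition pweight :: "nat \<Rightarrow> bits \<Rightarrow> bits \<Rightarrow> nat" where
  "pweight n v u = card {k. k < n \<and> (v k \<or> u k)}"

text \<open>Detectability of an operator E for a subspace Q (Knill--Laflamme form):
  <phi|E|psi> = C_E <phi|psi> for all phi, psi in Q.\<close>
definition detectable :: "nat \<Rightarrow> state set \<Rightarrow> (state \<Rightarrow> state) \<Rightarrow> bool" where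
  "detectable n Q E = (\<exists>C. \<forall>\<phi>\<in>Q. \<forall>\<psi>\<in>Q. qinner n \<phi> (E \<psi>) = C * qinner n \<phi> \<psi>)"

definition qdistance :: "nat \<Rightarrow> state set \<Rightarrow> nat" where
  "qdistance n Q = (LEAST w. \<exists>v\<in>bitstrs n. \<exists>u\<in>bitstrs n.
      pweight n v u = w \<and> \<not> detectable n Q (pauli n v u))"

definition simple_graph :: "nat \<Rightarrow> (nat \<Rightarrow> nat \<Rightarrow> bool) \<Rightarrow> bool" where
  "simple_graph n R = (\<forall>i j. R i j \<longrightarrow> i < n \<and> j < n \<and> i \<noteq> j \<and> R j i)"

definition adjrow :: "nat \<Rightarrow> (nat \<Rightarrow> nat \<Rightarrow> bool) \<Rightarrow> nat \<Rightarrow> bits" where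
  "adjrow n R i = (\<lambda>j. j < n \<and> R i j)"

definition graph_stab :: "nat \<Rightarrow> (nat \<Rightarrow> nat \<Rightarrow> bool) \<Rightarrow> nat \<Rightarrow> state \<Rightarrow> state" where
  "graph_stab n R i = pauli n (unitv i) (adjrow n R i)"

definition is_graph_state :: "nat \<Rightarrow> (nat \<Rightarrow> nat \<Rightarrow> bool) \<Rightarrow> state \<Rightarrow> bool" where
  "is_graph_state n R s = ((\<forall>x. x \<notin> bitstrs n \<longrightarrow> s x = 0) \<and> (\<exists>x. s x \<noteq> 0)
      \<and> (\<forall>i<n. graph_stab n R i s = s))"

definition cws_code :: "nat \<Rightarrow> state \<Rightarrow> bits set \<Rightarrow> state set" where
  "cws_code n s C = {\<psi>. \<exists>a :: bits \<Rightarrow> complex.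
      \<psi> = (\<lambda>x. \<Sum>c\<in>C. a c * pauli n zerov c s x)}"

type_synonym mat2 = "bool \<Rightarrow> bool \<Rightarrow> complex"

definition mmul2 :: "mat2 \<Rightarrow> mat2 \<Rightarrow> mat2" where
  "mmul2 A B = (\<lambda>i j. \<Sum>k\<in>UNIV. A i k * B k j)"

definition adj2 :: "mat2 \<Rightarrow> mat2" where
  "adj2 A = (\<lambda>i j. cnj (A j i))"

definition id2 :: mat2 where
  "id2 = (\<lambda>i j. if i = j then 1 else 0)"

text \<open>Single-qubit Pauli matrix X^a Z^b (index False = |0>, True = |1>).\<close>
definition pmat :: "bool \<Rightarrow> bool \<Rightarrow> mat2" where
  "pmat a b = (\<lambda>i j. if i = (j \<noteq> a) then (if b \<and> j then -1 else 1) else 0)"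

definition unitary2 :: "mat2 \<Rightarrow> bool" where
  "unitary2 U = (mmul2 U (adj2 U) = id2)"

definition clifford1 :: "mat2 \<Rightarrow> bool" where
  "clifford1 U = (unitary2 U \<and> (\<forall>a b. \<exists>c a' b'.
      mmul2 (mmul2 U (pmat a b)) (adj2 U) = (\<lambda>i j. c * pmat a' b' i j)))"

definition local_op :: "nat \<Rightarrow> (nat \<Rightarrow> mat2) \<Rightarrow> state \<Rightarrow> state" where
  "local_op n U \<psi> = (\<lambda>x. if x \<in> bitstrs n then
      (\<Sum>y\<in>bitstrs n. (\<Prod>k<n. U k (x k) (y k)) * \<psi> y) else 0)"

definition perm_state :: "(nat \<Rightarrow> nat) \<Rightarrow> state \<Rightarrow> state" where
  "perm_state \<pi> \<psi> = (\<lambda>x. \<psi> (x \<circ> \<pi>))"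

definition qubit_perm :: "nat \<Rightarrow> (nat \<Rightarrow> nat) \<Rightarrow> bool" where
  "qubit_perm n \<pi> = (bij_betw \<pi> {0..<n} {0..<n} \<and> (\<forall>k\<ge>n. \<pi> k = k))"

definition lc_equiv :: "nat \<Rightarrow> state set \<Rightarrow> state set \<Rightarrow> bool" where
  "lc_equiv n Q Q' = (\<exists>\<pi> U. qubit_perm n \<pi> \<and> (\<forall>k<n. clifford1 (U k)) \<and>
      Q' = (\<lambda>\<psi>. local_op n U (perm_state \<pi> \<psi>)) ` Q)"

definition kth_largest :: "nat list \<Rightarrow> nat \<Rightarrow> nat" where
  "kth_largest ws d = rev (sort ws) ! (d - 1)"

end

theory Submission
  imports Defs
begin


lemma finite_bitstrs: "finite (bitstrs n)"
proof -
  have "inj_on (\<lambda>x. {k. x k}) (bitstrs n)"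
    by (auto simp: inj_on_def set_eq_iff fun_eq_iff)
  moreover have "(\<lambda>x. {k. x k}) ` bitstrs n \<subseteq> Pow {..<n}"
    by (auto simp: bitstrs_def) (meson not_less)
  ultimately show ?thesis
    by (meson finite_Pow_iff finite_lessThan finite_subset inj_on_finite)
qed

lemma sgn_bdot: "(-1::complex) ^ bdot n u x = (\<Prod>k<n. if u k \<and> x k then -1 else 1)"
proof -
  have "(\<Prod>k<n. if u k \<and> x k then -1 else (1::complex)) =
     (\<Prod>k\<in>{k. k < n \<and> u k \<and> x k}. -1)"
    by (subst prod.If_cases) (simp_all add: Int_def lessThan_def conj_assoc)
  also have "\<dots> = (-1) ^ bdot n u x" by (simp add: bdot_def)
  finally show ?thesis by simp
qed

lemma bdot_bxor: "(-1::complex) ^ bdot n u (bxor x y) = (-1) ^ bdot n u x * (-1) ^ bdot n u y"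
  unfolding sgn_bdot prod.distrib[symmetric] by (rule prod.cong) (auto simp: bxor_def)

lemma bdot_comm: "bdot n u x = bdot n x u"
  unfolding bdot_def by (rule arg_cong[where f=card]) auto

lemma bdot_unitv: "i < n \<Longrightarrow> (-1::complex) ^ bdot n u (unitv i) = (if u i then -1 else 1)"
proof -
  assume i: "i < n"
  have "{k. k < n \<and> u k \<and> unitv i k} = (if u i then {i} else {})"
    using i by (auto simp: unitv_def)
  then show ?thesis by (simp add: bdot_def)
qed

lemma bxor_bxor[simp]: "bxor (bxor x v) v = x" by (auto simp: bxor_def fun_eq_iff)
lemma bxor_zero[simp]: "bxor x zerov = x" by (simp add: bxor_def zerov_def)
lemma bxor_in: "x \<in> bitstrs n \<Longrightarrow> v \<in> bitstrs n \<Longrightarrow> bxor x v \<in> bitstrs n"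
  by (simp add: bxor_def bitstrs_def)
lemma bxor_notin: "x \<notin> bitstrs n \<Longrightarrow> v \<in> bitstrs n \<Longrightarrow> bxor x v \<notin> bitstrs n"
  by (auto simp: bxor_def bitstrs_def)
lemma unitv_in: "i < n \<Longrightarrow> unitv i \<in> bitstrs n" by (simp add: unitv_def bitstrs_def)
lemma zerov_in: "zerov \<in> bitstrs n" by (simp add: zerov_def bitstrs_def)
lemma adjrow_in: "adjrow n R i \<in> bitstrs n" by (simp add: adjrow_def bitstrs_def)

lemma sq_sign: "(-1::complex) ^ k * (-1) ^ k = 1"
  by (simp flip: power_mult_distrib)

lemma bitstrs_Suc: "bitstrs (Suc n) = bitstrs n \<union> (\<lambda>z. z(n:=True)) ` bitstrs n"
proof -
  { fix x assume x: "x \<in> bitstrs (Suc n)" "x \<notin> bitstrs n"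
    then obtain k where k: "k \<ge> n" "x k" by (auto simp: bitstrs_def)
    with x(1) have "k = n" unfolding bitstrs_def by (metis Suc_leI le_neq_implies_less mem_Collect_eq)
    with k have "x n" by simp
    with x have "x = (x(n:=False))(n:=True)" "x(n:=False) \<in> bitstrs n"
      by (auto simp: bitstrs_def fun_eq_iff le_Suc_eq) 
    then have "x \<in> (\<lambda>z. z(n:=True)) ` bitstrs n" by blast }
  then show ?thesis by (auto simp: bitstrs_def)
qed

lemma sum_bitstrs_prod:
  "(\<Sum>z\<in>bitstrs n. \<Prod>k<n. f k (z k)) = (\<Prod>k<n. (f k False + f k True :: 'a::comm_semiring_1))"
proof (induction n)
  case 0
  have "bitstrs 0 = {zerov}" by (auto simp: bitstrs_def zerov_def)
  then show ?case by simp
next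
  case (Suc n)
  have disj: "bitstrs n \<inter> (\<lambda>z. z(n:=True)) ` bitstrs n = {}"
    by (auto simp: bitstrs_def)
  have inj: "inj_on (\<lambda>z. z(n:=True)) (bitstrs n)"
    by (auto simp: inj_on_def bitstrs_def fun_eq_iff)
  have p: "(\<Prod>k<n. f k ((z(n:=b)) k)) = (\<Prod>k<n. f k (z k))" for z b
    by (rule prod.cong) auto
  have z0: "z \<in> bitstrs n \<Longrightarrow> z n = False" for z by (simp add: bitstrs_def)
  have "(\<Sum>z\<in>bitstrs (Suc n). \<Prod>k<Suc n. f k (z k)) =
     (\<Sum>z\<in>bitstrs n. \<Prod>k<Suc n. f k (z k)) + (\<Sum>z\<in>bitstrs n. \<Prod>k<Suc n. f k ((z(n:=True)) k))"
    unfolding bitstrs_Suc using disj inj finite_bitstrs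
    by (simp add: sum.union_disjoint sum.reindex)
  also have "\<dots> = (\<Sum>z\<in>bitstrs n. (\<Prod>k<n. f k (z k)) * f n False) + (\<Sum>z\<in>bitstrs n. (\<Prod>k<n. f k (z k)) * f n True)"
    by (intro arg_cong2[where f="(+)"] sum.cong refl) (simp_all only: prod.lessThan_Suc p fun_upd_same z0)
  also have "\<dots> = (\<Prod>k<Suc n. (f k False + f k True))"
    by (simp add: Suc.IH sum_distrib_right[symmetric] distrib_left)
  finally show ?case .
qed


definition supp :: "nat \<Rightarrow> state \<Rightarrow> bool" where
  "supp n \<psi> = (\<forall>x. x \<notin> bitstrs n \<longrightarrow> \<psi> x = 0)"

definition kop :: "nat \<Rightarrow> (bits \<Rightarrow> bits \<Rightarrow> complex) \<Rightarrow> state \<Rightarrow> state" where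
  "kop n K \<psi> = (\<lambda>x. if x \<in> bitstrs n then \<Sum>y\<in>bitstrs n. K x y * \<psi> y else 0)"

definition tens :: "nat \<Rightarrow> (nat \<Rightarrow> mat2) \<Rightarrow> bits \<Rightarrow> bits \<Rightarrow> complex" where
  "tens n A = (\<lambda>x y. \<Prod>k<n. A k (x k) (y k))"

definition smul2 :: "complex \<Rightarrow> mat2 \<Rightarrow> mat2" where
  "smul2 c A = (\<lambda>i j. c * A i j)"

lemma kop_supp: "supp n (kop n K \<psi>)" by (simp add: supp_def kop_def)

lemma kop_comp: "kop n K (kop n M \<psi>) = kop n (\<lambda>x y. \<Sum>z\<in>bitstrs n. K x z * M z y) \<psi>"
proof -
  have "(\<Sum>z\<in>bitstrs n. K x z * (\<Sum>y\<in>bitstrs n. M z y * \<psi> y)) =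
        (\<Sum>y\<in>bitstrs n. (\<Sum>z\<in>bitstrs n. K x z * M z y) * \<psi> y)" for x
    by (simp add: sum_distrib_left sum_distrib_right mult.assoc) (rule sum.swap)
  then show ?thesis by (simp add: kop_def fun_eq_iff cong: if_cong)
qed

lemma kop_cong: "(\<And>x y. x \<in> bitstrs n \<Longrightarrow> y \<in> bitstrs n \<Longrightarrow> K x y = K' x y) \<Longrightarrow> kop n K \<psi> = kop n K' \<psi>"
  by (auto simp: kop_def fun_eq_iff intro!: sum.cong)

lemma kop_smul: "kop n (\<lambda>x y. c * K x y) \<psi> = (\<lambda>x. c * kop n K \<psi> x)"
  by (simp add: kop_def fun_eq_iff sum_distrib_left mult.assoc)

lemma tens_cong: "(\<And>k. k < n \<Longrightarrow> A k = A' k) \<Longrightarrow> tens n A = tens n A'"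
  by (simp add: tens_def)

lemma tens_comp: "(\<Sum>z\<in>bitstrs n. tens n A x z * tens n M z y) = tens n (\<lambda>k. mmul2 (A k) (M k)) x y"
proof -
  have "(\<Sum>z\<in>bitstrs n. tens n A x z * tens n M z y) =
     (\<Sum>z\<in>bitstrs n. \<Prod>k<n. (\<lambda>k b. A k (x k) b * M k b (y k)) k (z k))"
    by (simp add: tens_def prod.distrib)
  also have "\<dots> = tens n (\<lambda>k. mmul2 (A k) (M k)) x y"
    by (subst sum_bitstrs_prod) (simp add: tens_def mmul2_def UNIV_bool)
  finally show ?thesis .
qed

lemma tens_id: "x \<in> bitstrs n \<Longrightarrow> y \<in> bitstrs n \<Longrightarrow> tens n (\<lambda>k. id2) x y = (if x = y then 1 else 0)"
proof (cases "x = y")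
  case True then show ?thesis by (simp add: tens_def id2_def)
next
  case False
  assume xy: "x \<in> bitstrs n" "y \<in> bitstrs n"
  from False obtain k where k: "x k \<noteq> y k" by auto
  with xy have "k < n" by (auto simp: bitstrs_def) (meson not_less)
  with k False show ?thesis by (auto simp: tens_def id2_def intro!: prod_zero)
qed

lemma kop_id: "supp n \<psi> \<Longrightarrow> kop n (tens n (\<lambda>k. id2)) \<psi> = \<psi>"
proof -
  assume s: "supp n \<psi>"
  have "x \<in> bitstrs n \<Longrightarrow> (\<Sum>y\<in>bitstrs n. tens n (\<lambda>k. id2) x y * \<psi> y) = \<psi> x" for x
  proof -
    assume x: "x \<in> bitstrs n"
    have "(\<Sum>y\<in>bitstrs n. tens n (\<lambda>k. id2) x y * \<psi> y) = (\<Sum>y\<in>bitstrs n. if x = y then \<psi> y else 0)"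
      using x by (intro sum.cong) (simp_all add: tens_id)
    also have "\<dots> = \<psi> x" using x by (simp add: finite_bitstrs)
    finally show ?thesis .
  qed
  with s show ?thesis by (auto simp: kop_def supp_def fun_eq_iff)
qed

lemma tens_smul: "tens n (\<lambda>k. smul2 (c k) (A k)) x y = (\<Prod>k<n. c k) * tens n A x y"
  by (simp add: tens_def smul2_def prod.distrib)

lemma qinner_kop: "qinner n (kop n K \<phi>) \<chi> = qinner n \<phi> (kop n (\<lambda>x y. cnj (K y x)) \<chi>)"
proof -
  have "qinner n (kop n K \<phi>) \<chi> = (\<Sum>x\<in>bitstrs n. \<Sum>y\<in>bitstrs n. cnj (\<phi> y) * (cnj (K x y) * \<chi> x))"
    by (simp add: qinner_def kop_def sum_distrib_right sum_distrib_left mult_ac)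
  also have "\<dots> = (\<Sum>y\<in>bitstrs n. \<Sum>x\<in>bitstrs n. cnj (\<phi> y) * (cnj (K x y) * \<chi> x))"
    by (rule sum.swap)
  also have "\<dots> = qinner n \<phi> (kop n (\<lambda>x y. cnj (K y x)) \<chi>)"
    by (simp add: qinner_def kop_def sum_distrib_left)
  finally show ?thesis .
qed

lemma tens_adj: "cnj (tens n U y x) = tens n (\<lambda>k. adj2 (U k)) x y"
  by (simp add: tens_def adj2_def)

lemma local_op_kop: "local_op n U = kop n (tens n U)"
  by (simp add: local_op_def kop_def tens_def fun_eq_iff)

lemma local_op_isometry:
  assumes u: "\<And>k. k < n \<Longrightarrow> mmul2 (adj2 (U k)) (U k) = id2"
    and s: "supp n \<psi>"
  shows "qinner n (local_op n U \<phi>) (local_op n U \<psi>) = qinner n \<phi> \<psi>"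
proof -
  have "qinner n (local_op n U \<phi>) (local_op n U \<psi>) =
     qinner n \<phi> (kop n (\<lambda>x y. \<Sum>z\<in>bitstrs n. tens n (\<lambda>k. adj2 (U k)) x z * tens n U z y) \<psi>)"
    by (simp add: local_op_kop qinner_kop tens_adj kop_comp)
  also have "\<dots> = qinner n \<phi> (kop n (tens n (\<lambda>k. id2)) \<psi>)"
    by (simp add: tens_comp u tens_cong[of n "\<lambda>k. mmul2 (adj2 (U k)) (U k)" "\<lambda>k. id2"])
  also have "\<dots> = qinner n \<phi> \<psi>" using s by (simp add: kop_id)
  finally show ?thesis .
qed


lemma tens_pauli:
  assumes "x \<in> bitstrs n" "y \<in> bitstrs n" "v \<in> bitstrs n"
  shows "tens n (\<lambda>k. pmat (v k) (u k)) x y = (if y = bxor x v then (-1) ^ bdot n u y else 0)"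
proof (cases "y = bxor x v")
  case True then show ?thesis
    unfolding tens_def sgn_bdot by (simp, intro prod.cong) (auto simp: pmat_def bxor_def)
next
  case False
  then obtain k where k: "y k \<noteq> (x k \<noteq> v k)" by (auto simp: bxor_def)
  with assms have "k < n" by (auto simp: bitstrs_def) (meson not_less)+
  with k False show ?thesis by (auto simp: tens_def pmat_def intro!: prod_zero)
qed

lemma pauli_kop:
  assumes s: "supp n \<psi>" and v: "v \<in> bitstrs n"
  shows "pauli n v u \<psi> = kop n (tens n (\<lambda>k. pmat (v k) (u k))) \<psi>"
proof (rule ext)
  fix x
  show "pauli n v u \<psi> x = kop n (tens n (\<lambda>k. pmat (v k) (u k))) \<psi> x"
  proof (cases "x \<in> bitstrs n")
    case True
    have "(\<Sum>y\<in>bitstrs n. tens n (\<lambda>k. pmat (v k) (u k)) x y * \<psi> y) =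
          (\<Sum>y\<in>bitstrs n. if y = bxor x v then (-1) ^ bdot n u y * \<psi> y else 0)"
      using True v by (intro sum.cong) (simp_all add: tens_pauli)
    also have "\<dots> = (-1) ^ bdot n u (bxor x v) * \<psi> (bxor x v)"
      using True v by (simp add: finite_bitstrs bxor_in)
    finally show ?thesis using True by (simp add: pauli_def kop_def)
  next
    case False
    then show ?thesis using s v bxor_notin[OF False v] by (simp add: pauli_def kop_def supp_def)
  qed
qed

lemma pauli_supp: "supp n \<psi> \<Longrightarrow> v \<in> bitstrs n \<Longrightarrow> supp n (pauli n v u \<psi>)"
  by (simp add: pauli_kop kop_supp)

subsection \<open>2x2 matrices\<close>

lemma mmul2_assoc: "mmul2 (mmul2 A B) C = mmul2 A (mmul2 B C)"
  by (simp add: mmul2_def UNIV_bool fun_eq_iff algebra_simps)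

lemma mmul2_id[simp]: "mmul2 id2 A = A" "mmul2 A id2 = A"
  by (simp_all add: mmul2_def UNIV_bool fun_eq_iff id2_def)

lemma mmul2_smul[simp]: "mmul2 (smul2 c A) B = smul2 c (mmul2 A B)" "mmul2 A (smul2 c B) = smul2 c (mmul2 A B)"
  by (simp_all add: mmul2_def smul2_def UNIV_bool fun_eq_iff algebra_simps)

lemma smul2_smul[simp]: "smul2 c (smul2 d A) = smul2 (c * d) A"
  by (simp add: smul2_def fun_eq_iff)

lemma smul2_one[simp]: "smul2 1 A = A" by (simp add: smul2_def)

lemma unitary_left:
  assumes "mmul2 U (adj2 U) = id2" shows "mmul2 (adj2 U) U = id2"
proof -
  define a where "a = U False False"
  define b where "b = U False True"
  define c where "c = U True False"
  define d where "d = U True True"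
  define e where "e = cnj a"
  define f where "f = cnj c"
  define g where "g = cnj b"
  define h where "h = cnj d"
  from assms have h1: "a * e + b * g = 1" "a * f + b * h = 0" "c * e + d * g = 0" "c * f + d * h = 1"
    unfolding a_def b_def c_def d_def e_def f_def g_def h_def
    by (auto simp: mmul2_def adj2_def id2_def UNIV_bool fun_eq_iff dest: spec[of _ False] spec[of _ True])
  have "e * a + f * c = 1" "e * b + f * d = 0" "g * a + h * c = 0" "g * b + h * d = 1"
    using h1 by algebra+
  then have h2: "cnj (U False False) * U False False + cnj (U True False) * U True False = 1"
      "cnj (U False False) * U False True + cnj (U True False) * U True True = 0"
      "cnj (U False True) * U False False + cnj (U True True) * U True False = 0"
      "cnj (U False True) * U False True + cnj (U True True) * U True True = 1"
    unfolding a_def b_def c_def d_def e_def f_def g_def h_def by simp_all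
  show ?thesis
  proof (rule ext, rule ext)
    fix i j show "mmul2 (adj2 U) U i j = id2 i j"
      using h2 by (cases i; cases j) (simp_all add: mmul2_def adj2_def id2_def UNIV_bool)
  qed
qed

lemma pmat_FF: "pmat False False = id2" by (simp add: pmat_def id2_def fun_eq_iff)

lemma pmat_smul_eq: assumes "pmat a b = smul2 c (pmat a' b')" shows "a = a' \<and> b = b'"
proof -
  have e: "\<And>i j. pmat a b i j = c * pmat a' b' i j" using assms by (simp add: smul2_def fun_eq_iff)
  show ?thesis using e[of False False] e[of True False] e[of False True] e[of True True]
    by (cases a; cases b; cases a'; cases b') (auto simp: pmat_def)
qed

lemma pmat_nz: "pmat a b \<noteq> smul2 0 A"
proof
  assume "pmat a b = smul2 0 A"
  then have e: "\<And>i j. pmat a b i j = 0" by (simp add: smul2_def fun_eq_iff)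
  show False using e[of False False] e[of True False] by (cases a) (auto simp: pmat_def)
qed


lemma left_cancel: "mmul2 (adj2 U) U = id2 \<Longrightarrow> mmul2 U X = mmul2 U Y \<Longrightarrow> X = Y"
  by (metis mmul2_assoc mmul2_id(1))

lemma right_cancel: "mmul2 U (adj2 U) = id2 \<Longrightarrow> mmul2 X U = mmul2 Y U \<Longrightarrow> X = Y"
  by (metis mmul2_assoc mmul2_id(2))

lemma cliff_fwd:
  assumes "clifford1 U"
  shows "\<exists>a' b' c. c \<noteq> 0 \<and> mmul2 U (pmat a b) = smul2 c (mmul2 (pmat a' b') U)"
proof -
  have uu: "mmul2 U (adj2 U) = id2" using assms by (simp add: clifford1_def unitary2_def)
  have uu': "mmul2 (adj2 U) U = id2" by (rule unitary_left[OF uu])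
  from assms obtain c a' b' where e: "mmul2 (mmul2 U (pmat a b)) (adj2 U) = smul2 c (pmat a' b')"
    using assms unfolding clifford1_def smul2_def by blast
  have "mmul2 U (pmat a b) = mmul2 (mmul2 (mmul2 U (pmat a b)) (adj2 U)) U"
    by (simp add: mmul2_assoc uu')
  also have "\<dots> = smul2 c (mmul2 (pmat a' b') U)" by (simp add: e)
  finally have e2: "mmul2 U (pmat a b) = smul2 c (mmul2 (pmat a' b') U)" .
  have "c \<noteq> 0"
  proof
    assume "c = 0"
    with e2 have "mmul2 U (pmat a b) = mmul2 U (smul2 0 (pmat a' b'))" by (simp add: smul2_def mmul2_def)
    then have "pmat a b = smul2 0 (pmat a' b')" by (rule left_cancel[OF uu'])
    with pmat_nz show False by blast
  qed
  with e2 show ?thesis by blast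
qed

lemma cliff_bwd:
  assumes "clifford1 U"
  shows "\<exists>a b c. c \<noteq> 0 \<and> mmul2 U (pmat a b) = smul2 c (mmul2 (pmat a' b') U) \<and> ((a \<or> b) = (a' \<or> b'))"
proof -
  have uu: "mmul2 U (adj2 U) = id2" using assms by (simp add: clifford1_def unitary2_def)
  have uu': "mmul2 (adj2 U) U = id2" by (rule unitary_left[OF uu])
  have "\<forall>p. \<exists>q. \<exists>c. c \<noteq> 0 \<and> mmul2 U (pmat (fst p) (snd p)) = smul2 c (mmul2 (pmat (fst q) (snd q)) U)"
    using cliff_fwd[OF assms] by fastforce
  then obtain g where g: "\<And>p. \<exists>c. c \<noteq> 0 \<and> mmul2 U (pmat (fst p) (snd p)) = smul2 c (mmul2 (pmat (fst (g p)) (snd (g p))) U)"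
    by metis
  have "inj g"
  proof (rule injI)
    fix p1 p2 assume eq: "g p1 = g p2"
    obtain c1 where c1: "c1 \<noteq> 0" "mmul2 U (pmat (fst p1) (snd p1)) = smul2 c1 (mmul2 (pmat (fst (g p1)) (snd (g p1))) U)"
      using g by blast
    obtain c2 where c2: "c2 \<noteq> 0" "mmul2 U (pmat (fst p2) (snd p2)) = smul2 c2 (mmul2 (pmat (fst (g p1)) (snd (g p1))) U)"
      using g eq by metis
    have "mmul2 U (pmat (fst p1) (snd p1)) = smul2 (c1 / c2) (mmul2 U (pmat (fst p2) (snd p2)))"
      using c1 c2 by simp
    then have "mmul2 U (pmat (fst p1) (snd p1)) = mmul2 U (smul2 (c1 / c2) (pmat (fst p2) (snd p2)))"
      by simp
    then have "pmat (fst p1) (snd p1) = smul2 (c1 / c2) (pmat (fst p2) (snd p2))"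
      by (rule left_cancel[OF uu'])
    from pmat_smul_eq[OF this] show "p1 = p2" by (simp add: prod_eq_iff)
  qed
  then have "surj g" by (simp add: finite_UNIV_inj_surj)
  then obtain p where p: "g p = (a', b')" by (metis surjD)
  from g[of p] p obtain c where c: "c \<noteq> 0" "mmul2 U (pmat (fst p) (snd p)) = smul2 c (mmul2 (pmat a' b') U)"
    by auto
  have w: "(fst p \<or> snd p) = (a' \<or> b')"
  proof
    assume "fst p \<or> snd p"
    show "a' \<or> b'"
    proof (rule ccontr)
      assume "\<not> (a' \<or> b')"
      with c have "mmul2 U (pmat (fst p) (snd p)) = mmul2 U (smul2 c (pmat False False))"
        by (simp add: pmat_FF)
      then have "pmat (fst p) (snd p) = smul2 c (pmat False False)" by (rule left_cancel[OF uu'])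
      with \<open>fst p \<or> snd p\<close> pmat_smul_eq show False by blast
    qed
  next
    assume "a' \<or> b'"
    show "fst p \<or> snd p"
    proof (rule ccontr)
      assume "\<not> (fst p \<or> snd p)"
      with c have "mmul2 (pmat False False) U = mmul2 (smul2 c (pmat a' b')) U"
        by (simp add: pmat_FF)
      then have "pmat False False = smul2 c (pmat a' b')" by (rule right_cancel[OF uu])
      with \<open>a' \<or> b'\<close> pmat_smul_eq show False by blast
    qed
  qed
  show ?thesis using c w by blast
qed


lemma local_pull:
  assumes cl: "\<forall>k<n. clifford1 (U k)" and v': "v' \<in> bitstrs n" and u': "u' \<in> bitstrs n"
  shows "\<exists>v\<in>bitstrs n. \<exists>u\<in>bitstrs n. pweight n v u = pweight n v' u' \<and> (\<exists>c. c \<noteq> 0 \<and>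
     (\<forall>\<psi>. supp n \<psi> \<longrightarrow> local_op n U (pauli n v u \<psi>) = (\<lambda>x. c * pauli n v' u' (local_op n U \<psi>) x)))"
proof -
  define P where "P = (\<lambda>k (t::bool\<times>bool\<times>complex). k < n \<longrightarrow> (snd (snd t) \<noteq> 0 \<and> mmul2 (U k) (pmat (fst t) (fst (snd t))) = smul2 (snd (snd t)) (mmul2 (pmat (v' k) (u' k)) (U k))
      \<and> ((fst t \<or> fst (snd t)) = (v' k \<or> u' k))))"
  have "\<forall>k. \<exists>t. P k t"
  proof
    fix k show "\<exists>t. P k t"
    proof (cases "k < n")
      case True
      then obtain a b c where "c \<noteq> 0 \<and> mmul2 (U k) (pmat a b) = smul2 c (mmul2 (pmat (v' k) (u' k)) (U k))
      \<and> ((a \<or> b) = (v' k \<or> u' k))" using cliff_bwd[OF cl[rule_format, OF True], of "v' k" "u' k"] by metis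
      then have "P k (a, b, c)" unfolding P_def by (simp only: fst_conv snd_conv) blast
      then show ?thesis by blast
    next
      case False
      then have "P k (False, False, 0)" unfolding P_def by blast
      then show ?thesis by blast
    qed
  qed
  from choice[OF this] obtain F where F0: "\<forall>k. P k (F k)" by (elim exE)
  have F: "\<And>k. P k (F k)" using F0 by (rule spec)
  define fa where "fa = (\<lambda>k. fst (F k))"
  define fb where "fb = (\<lambda>k. fst (snd (F k)))"
  define fc where "fc = (\<lambda>k. snd (snd (F k)))"
  have f: "fc k \<noteq> 0 \<and> mmul2 (U k) (pmat (fa k) (fb k)) = smul2 (fc k) (mmul2 (pmat (v' k) (u' k)) (U k))
      \<and> ((fa k \<or> fb k) = (v' k \<or> u' k))" if k: "k < n" for k
    using F[of k] k unfolding P_def fa_def fb_def fc_def by simp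
  define v where "v = (\<lambda>k. k < n \<and> fa k)"
  define u where "u = (\<lambda>k. k < n \<and> fb k)"
  define c where "c = (\<Prod>k<n. fc k)"
  have vB: "v \<in> bitstrs n" and uB: "u \<in> bitstrs n" by (auto simp: v_def u_def bitstrs_def)
  have f1: "\<And>k. k < n \<Longrightarrow> fc k \<noteq> 0" and
    f2: "\<And>k. k < n \<Longrightarrow> mmul2 (U k) (pmat (fa k) (fb k)) = smul2 (fc k) (mmul2 (pmat (v' k) (u' k)) (U k))" and
    f3: "\<And>k. k < n \<Longrightarrow> (fa k \<or> fb k) = (v' k \<or> u' k)" using f by blast+
  have "{k. k < n \<and> (v k \<or> u k)} = {k. k < n \<and> (v' k \<or> u' k)}"
    using f3 unfolding v_def u_def by blast
  then have w: "pweight n v u = pweight n v' u'"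
    unfolding pweight_def by simp
  have c0: "c \<noteq> 0" unfolding c_def using f1 by (simp add: prod_zero_iff)
  have main: "local_op n U (pauli n v u \<psi>) = (\<lambda>x. c * pauli n v' u' (local_op n U \<psi>) x)" if s: "supp n \<psi>" for \<psi>
  proof -
    have "local_op n U (pauli n v u \<psi>) = kop n (tens n (\<lambda>k. mmul2 (U k) (pmat (v k) (u k)))) \<psi>"
      by (simp add: local_op_kop pauli_kop[OF s vB] kop_comp tens_comp)
    also have "\<dots> = kop n (tens n (\<lambda>k. smul2 (fc k) (mmul2 (pmat (v' k) (u' k)) (U k)))) \<psi>"
      using f2 by (intro arg_cong[where f="\<lambda>K. kop n K \<psi>"] tens_cong) (simp add: v_def u_def)
    also have "\<dots> = kop n (\<lambda>x y. c * tens n (\<lambda>k. mmul2 (pmat (v' k) (u' k)) (U k)) x y) \<psi>"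
      by (simp add: tens_smul c_def fun_eq_iff[symmetric] cong del: kop_cong)
         (rule arg_cong[where f="\<lambda>K. kop n K \<psi>"], simp add: fun_eq_iff tens_smul)
    also have "\<dots> = (\<lambda>x. c * kop n (tens n (\<lambda>k. mmul2 (pmat (v' k) (u' k)) (U k))) \<psi> x)"
      by (rule kop_smul)
    also have "kop n (tens n (\<lambda>k. mmul2 (pmat (v' k) (u' k)) (U k))) \<psi> = pauli n v' u' (local_op n U \<psi>)"
      by (simp add: local_op_kop pauli_kop[OF kop_supp v'] kop_comp tens_comp)
    finally show ?thesis .
  qed
  show ?thesis using vB uB w c0 main by blast
qed


subsection \<open>Permutations\<close>

lemma card_perm:
  assumes p: "qubit_perm n \<pi>"
  shows "card {k. k < n \<and> P (\<pi> k)} = card {k. k < n \<and> P k}"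
proof -
  have b: "bij_betw \<pi> {0..<n} {0..<n}" using p by (simp add: qubit_perm_def)
  have "\<pi> ` {k. k < n \<and> P (\<pi> k)} = {k. k < n \<and> P k}"
  proof
    show "\<pi> ` {k. k < n \<and> P (\<pi> k)} \<subseteq> {k. k < n \<and> P k}"
      using b by (auto simp: bij_betw_def)
  next
    show "{k. k < n \<and> P k} \<subseteq> \<pi> ` {k. k < n \<and> P (\<pi> k)}"
    proof
      fix j assume j: "j \<in> {k. k < n \<and> P k}"
      then have "j \<in> \<pi> ` {0..<n}" using b by (simp add: bij_betw_def)
      then obtain k where "k \<in> {0..<n}" "j = \<pi> k" by blast
      with j show "j \<in> \<pi> ` {k. k < n \<and> P (\<pi> k)}" by auto
    qed
  qed
  moreover have "inj_on \<pi> {k. k < n \<and> P (\<pi> k)}"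
    using b by (auto simp: bij_betw_def intro: inj_on_subset)
  ultimately show ?thesis by (metis card_image)
qed

lemma bdot_perm: "qubit_perm n \<pi> \<Longrightarrow> bdot n (u \<circ> \<pi>) (y \<circ> \<pi>) = bdot n u y"
  unfolding bdot_def using card_perm[of n \<pi> "\<lambda>k. u k \<and> y k"] by simp

lemma pweight_perm: "qubit_perm n \<pi> \<Longrightarrow> pweight n (v \<circ> \<pi>) (u \<circ> \<pi>) = pweight n v u"
  unfolding pweight_def using card_perm[of n \<pi> "\<lambda>k. v k \<or> u k"] by simp

lemma comp_perm_in: "qubit_perm n \<pi> \<Longrightarrow> x \<in> bitstrs n \<Longrightarrow> x \<circ> \<pi> \<in> bitstrs n"
  by (simp add: qubit_perm_def bitstrs_def)

lemma comp_perm_notin: "qubit_perm n \<pi> \<Longrightarrow> x \<notin> bitstrs n \<Longrightarrow> x \<circ> \<pi> \<notin> bitstrs n"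
  by (auto simp: qubit_perm_def bitstrs_def)

lemma perm_supp: "qubit_perm n \<pi> \<Longrightarrow> supp n \<psi> \<Longrightarrow> supp n (perm_state \<pi> \<psi>)"
  by (simp add: supp_def perm_state_def comp_perm_notin)

lemma perm_inverse:
  assumes p: "qubit_perm n \<pi>"
  obtains \<rho> where "\<And>k. \<pi> (\<rho> k) = k" "\<And>k. \<rho> (\<pi> k) = k" "\<And>k. k \<ge> n \<Longrightarrow> \<rho> k = k"
proof -
  have b: "bij_betw \<pi> {0..<n} {0..<n}" and f: "\<And>k. k \<ge> n \<Longrightarrow> \<pi> k = k"
    using p by (simp_all add: qubit_perm_def)
  define \<rho> where "\<rho> = (\<lambda>k. if k < n then inv_into {0..<n} \<pi> k else k)"
  have 1: "\<pi> (\<rho> k) = k" for k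
  proof (cases "k < n")
    case True
    then have "k \<in> \<pi> ` {0..<n}" using b by (simp add: bij_betw_def)
    then show ?thesis using True by (simp add: \<rho>_def f_inv_into_f)
  qed (simp add: \<rho>_def f)
  have 2: "\<rho> (\<pi> k) = k" for k
  proof (cases "k < n")
    case True
    then have "\<pi> k < n" using b by (auto simp: bij_betw_def)
    then show ?thesis using True b by (simp add: \<rho>_def bij_betw_def inv_into_f_f)
  qed (simp add: \<rho>_def f)
  show ?thesis by (rule that[OF 1 2]) (simp add: \<rho>_def)
qed

lemma perm_isometry:
  assumes p: "qubit_perm n \<pi>"
  shows "qinner n (perm_state \<pi> \<phi>) (perm_state \<pi> \<psi>) = qinner n \<phi> \<psi>"
proof -
  obtain \<rho> where r: "\<And>k. \<pi> (\<rho> k) = k" "\<And>k. \<rho> (\<pi> k) = k" "\<And>k. k \<ge> n \<Longrightarrow> \<rho> k = k"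
    using perm_inverse[OF p] by blast
  show ?thesis unfolding qinner_def perm_state_def
  proof (rule sum.reindex_bij_witness[where j="\<lambda>x. x \<circ> \<pi>" and i="\<lambda>y. y \<circ> \<rho>"])
    show "\<And>a. a \<in> bitstrs n \<Longrightarrow> a \<circ> \<pi> \<circ> \<rho> = a" by (simp add: fun_eq_iff r)
    show "\<And>a. a \<in> bitstrs n \<Longrightarrow> a \<circ> \<pi> \<in> bitstrs n" using p by (rule comp_perm_in)
    show "\<And>b. b \<in> bitstrs n \<Longrightarrow> b \<circ> \<rho> \<circ> \<pi> = b" by (simp add: fun_eq_iff r)
    show "\<And>b. b \<in> bitstrs n \<Longrightarrow> b \<circ> \<rho> \<in> bitstrs n" by (simp add: bitstrs_def r)
  qed simp
qed

lemma perm_pauli: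
  assumes p: "qubit_perm n \<pi>"
  shows "perm_state \<pi> (pauli n (v \<circ> \<pi>) (u \<circ> \<pi>) \<psi>) = pauli n v u (perm_state \<pi> \<psi>)"
proof -
  have e: "bxor (x \<circ> \<pi>) (v \<circ> \<pi>) = bxor x v \<circ> \<pi>" for x by (simp add: bxor_def fun_eq_iff)
  show ?thesis
    unfolding perm_state_def pauli_def e by (simp add: bdot_perm[OF p])
qed

lemma bitstrs_perm_in: "qubit_perm n \<pi> \<Longrightarrow> v \<in> bitstrs n \<Longrightarrow> v \<circ> \<pi> \<in> bitstrs n"
  by (rule comp_perm_in)

lemma qinner_smul: "qinner n \<phi> (\<lambda>x. c * f x) = c * qinner n \<phi> f"
  by (simp add: qinner_def sum_distrib_left mult_ac)

lemma full_pull: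
  assumes p: "qubit_perm n \<pi>" and cl: "\<forall>k<n. clifford1 (U k)"
    and v': "v' \<in> bitstrs n" and u': "u' \<in> bitstrs n"
    and Qs: "\<And>\<psi>. \<psi> \<in> Q \<Longrightarrow> supp n \<psi>"
    and nd: "\<not> detectable n ((\<lambda>\<psi>. local_op n U (perm_state \<pi> \<psi>)) ` Q) (pauli n v' u')"
  shows "\<exists>v\<in>bitstrs n. \<exists>u\<in>bitstrs n. pweight n v u = pweight n v' u' \<and> \<not> detectable n Q (pauli n v u)"
proof -
  define V where "V = (\<lambda>\<psi>. local_op n U (perm_state \<pi> \<psi>))"
  obtain v1 u1 c where v1: "v1 \<in> bitstrs n" and u1: "u1 \<in> bitstrs n" and w1: "pweight n v1 u1 = pweight n v' u'"
    and c: "c \<noteq> 0" and L: "\<And>\<psi>. supp n \<psi> \<Longrightarrow> local_op n U (pauli n v1 u1 \<psi>) = (\<lambda>x. c * pauli n v' u' (local_op n U \<psi>) x)"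
    using local_pull[OF cl v' u'] by blast
  have uni: "\<And>k. k < n \<Longrightarrow> mmul2 (adj2 (U k)) (U k) = id2"
    using cl unitary_left by (simp add: clifford1_def unitary2_def)
  have iso: "qinner n (V \<phi>) (V \<psi>) = qinner n \<phi> \<psi>" if "supp n \<psi>" for \<phi> \<psi>
    unfolding V_def using that
    by (simp add: local_op_isometry[OF uni] perm_supp[OF p] perm_isometry[OF p])
  have VP: "pauli n v' u' (V \<psi>) = (\<lambda>x. (1 / c) * V (pauli n (v1 \<circ> \<pi>) (u1 \<circ> \<pi>) \<psi>) x)" if s: "supp n \<psi>" for \<psi>
    using c by (simp add: V_def perm_pauli[OF p] L[OF perm_supp[OF p s]])
  have "\<not> detectable n Q (pauli n (v1 \<circ> \<pi>) (u1 \<circ> \<pi>))"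
  proof
    assume "detectable n Q (pauli n (v1 \<circ> \<pi>) (u1 \<circ> \<pi>))"
    then obtain C0 where C0: "\<And>\<phi> \<psi>. \<phi> \<in> Q \<Longrightarrow> \<psi> \<in> Q \<Longrightarrow>
        qinner n \<phi> (pauli n (v1 \<circ> \<pi>) (u1 \<circ> \<pi>) \<psi>) = C0 * qinner n \<phi> \<psi>"
      by (auto simp: detectable_def)
    have "detectable n (V ` Q) (pauli n v' u')"
      unfolding detectable_def
    proof (intro exI ballI)
      fix \<phi>' \<psi>' assume "\<phi>' \<in> V ` Q" "\<psi>' \<in> V ` Q"
      then obtain \<phi> \<psi> where ph: "\<phi> \<in> Q" "\<phi>' = V \<phi>" and ps: "\<psi> \<in> Q" "\<psi>' = V \<psi>" by blast
      have sps: "supp n \<psi>" using Qs ps by blast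
      have sP: "supp n (pauli n (v1 \<circ> \<pi>) (u1 \<circ> \<pi>) \<psi>)"
        by (rule pauli_supp[OF sps bitstrs_perm_in[OF p v1]])
      have "qinner n \<phi>' (pauli n v' u' \<psi>') = (1 / c) * qinner n (V \<phi>) (V (pauli n (v1 \<circ> \<pi>) (u1 \<circ> \<pi>) \<psi>))"
        using ph ps by (simp only: VP[OF sps] qinner_smul)
      also have "\<dots> = (1 / c) * (C0 * qinner n \<phi> \<psi>)"
        by (simp add: iso[OF sP] C0[OF ph(1) ps(1)])
      also have "\<dots> = (C0 / c) * qinner n \<phi>' \<psi>'"
        using ph ps by (simp add: iso[OF sps])
      finally show "qinner n \<phi>' (pauli n v' u' \<psi>') = (C0 / c) * qinner n \<phi>' \<psi>'" .
    qed
    with nd show False by (simp add: V_def)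
  qed
  then show ?thesis
    using bitstrs_perm_in[OF p v1] bitstrs_perm_in[OF p u1] w1 pweight_perm[OF p] by metis
qed


subsection \<open>Graph codes\<close>

lemma zst_apply: "pauli n zerov c s x = (-1) ^ bdot n c x * s x"
  by (simp add: pauli_def)

lemma cnj_sign[simp]: "cnj ((-1::complex) ^ k) = (-1) ^ k" by simp

lemma bdot_bxor1: "(-1::complex) ^ bdot n (bxor c c') x = (-1) ^ bdot n c x * (-1) ^ bdot n c' x"
  by (metis bdot_bxor bdot_comm)

lemma gs_rel:
  assumes g: "is_graph_state n R s" and i: "i < n"
  shows "s x = (-1) ^ bdot n (adjrow n R i) (bxor x (unitv i)) * s (bxor x (unitv i))"
proof -
  have "graph_stab n R i s = s" using g i by (simp add: is_graph_state_def)
  then have "graph_stab n R i s x = s x" by simp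
  then show ?thesis by (simp add: graph_stab_def pauli_def)
qed

lemma gs_normeq:
  assumes g: "is_graph_state n R s" and i: "i < n"
  shows "cnj (s (bxor x (unitv i))) * s (bxor x (unitv i)) = cnj (s x) * s x"
proof -
  let ?y = "bxor x (unitv i)" and ?k = "bdot n (adjrow n R i) (bxor x (unitv i))"
  have "cnj (s x) * s x = ((-1) ^ ?k * (-1) ^ ?k) * (cnj (s ?y) * s ?y)"
    by (subst (1 2) gs_rel[OF g i]) (simp add: mult_ac)
  then show ?thesis by (simp add: sq_sign)
qed

lemma gs_orth:
  assumes g: "is_graph_state n R s" and w: "w \<in> bitstrs n" "w \<noteq> zerov"
  shows "(\<Sum>x\<in>bitstrs n. (-1) ^ bdot n w x * (cnj (s x) * s x)) = 0"
proof -
  obtain i where wi: "w i" using w(2) by (auto simp: zerov_def fun_eq_iff)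
  then have i: "i < n" using w(1) by (auto simp: bitstrs_def) (meson not_less)
  define f where "f = (\<lambda>x. (-1::complex) ^ bdot n w x * (cnj (s x) * s x))"
  have "sum f (bitstrs n) = (\<Sum>x\<in>bitstrs n. f (bxor x (unitv i)))"
  proof (rule sum.reindex_bij_witness[where j="\<lambda>x. bxor x (unitv i)" and i="\<lambda>x. bxor x (unitv i)"])
  qed (simp_all add: bxor_in unitv_in[OF i])
  also have "\<dots> = (\<Sum>x\<in>bitstrs n. - f x)"
    by (rule sum.cong) (simp_all add: f_def bdot_bxor bdot_unitv[OF i] wi gs_normeq[OF g i])
  finally have "sum f (bitstrs n) = - sum f (bitstrs n)" by (simp add: sum_negf)
  then show ?thesis unfolding f_def by simp
qed

lemma z_inner:
  assumes g: "is_graph_state n R s" and c: "c \<in> bitstrs n" "c' \<in> bitstrs n"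
  shows "qinner n (pauli n zerov c s) (pauli n zerov c' s) = (if c = c' then qinner n s s else 0)"
proof -
  have "qinner n (pauli n zerov c s) (pauli n zerov c' s) =
      (\<Sum>x\<in>bitstrs n. (-1) ^ bdot n (bxor c c') x * (cnj (s x) * s x))"
    unfolding qinner_def zst_apply by (rule sum.cong) (simp_all add: bdot_bxor1 mult_ac)
  also have "\<dots> = (if c = c' then qinner n s s else 0)"
  proof (cases "c = c'")
    case True
    have "bxor c c = zerov" by (simp add: bxor_def zerov_def)
    then show ?thesis using True by (simp add: qinner_def bdot_def zerov_def)
  next
    case False
    then have "bxor c c' \<noteq> zerov" by (auto simp: bxor_def zerov_def fun_eq_iff)
    with False show ?thesis using gs_orth[OF g bxor_in[OF c]] by simp
  qed
  finally show ?thesis .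
qed

lemma gs_norm_nz:
  assumes g: "is_graph_state n R s"
  shows "qinner n s s \<noteq> 0"
proof -
  obtain x0 where x0: "s x0 \<noteq> 0" using g by (auto simp: is_graph_state_def)
  then have x0B: "x0 \<in> bitstrs n" using g by (auto simp: is_graph_state_def)
  have "qinner n s s = of_real (\<Sum>x\<in>bitstrs n. (norm (s x))\<^sup>2)"
    unfolding qinner_def of_real_sum complex_norm_square by (simp add: mult.commute)
  moreover have "(\<Sum>x\<in>bitstrs n. (norm (s x))\<^sup>2) > 0"
    by (rule sum_pos2[OF finite_bitstrs x0B]) (simp_all add: x0)
  ultimately show ?thesis by (metis less_irrefl of_real_eq_0_iff)
qed

lemma stab_z:
  assumes g: "is_graph_state n R s" and i: "i < n"
  shows "graph_stab n R i (pauli n zerov c s) = (\<lambda>x. (if c i then -1 else 1) * pauli n zerov c s x)"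
proof
  fix x
  let ?y = "bxor x (unitv i)"
  have "graph_stab n R i (pauli n zerov c s) x =
      (-1) ^ bdot n c ?y * ((-1) ^ bdot n (adjrow n R i) ?y * s ?y)"
    by (simp add: graph_stab_def pauli_def mult_ac)
  also have "\<dots> = (-1) ^ bdot n c ?y * s x" by (simp flip: gs_rel[OF g i])
  also have "\<dots> = (if c i then -1 else 1) * pauli n zerov c s x"
    by (simp add: zst_apply bdot_bxor bdot_unitv[OF i])
  finally show "graph_stab n R i (pauli n zerov c s) x = (if c i then -1 else 1) * pauli n zerov c s x" .
qed

lemma z_in_code:
  assumes "finite C" "c \<in> C" shows "pauli n zerov c s \<in> cws_code n s C"
proof -
  have "(\<Sum>c'\<in>C. (if c' = c then 1 else 0) * pauli n zerov c' s x) = pauli n zerov c s x" for x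
  proof -
    have "(\<Sum>c'\<in>C. (if c' = c then 1 else 0) * pauli n zerov c' s x) = (\<Sum>c'\<in>C. if c' = c then pauli n zerov c' s x else 0)"
      by (rule sum.cong) auto
    also have "\<dots> = pauli n zerov c s x" using assms by simp
    finally show ?thesis .
  qed
  then show ?thesis unfolding cws_code_def
    by (intro CollectI exI[where x="\<lambda>c'. if c' = c then 1 else 0"]) (simp add: fun_eq_iff)
qed

lemma code_supp: "is_graph_state n R s \<Longrightarrow> \<psi> \<in> cws_code n s C \<Longrightarrow> supp n \<psi>"
  by (auto simp: cws_code_def supp_def zst_apply is_graph_state_def)

lemma qinner_smul1: "qinner n (\<lambda>x. b * f x) g = cnj b * qinner n f g"
  by (simp add: qinner_def sum_distrib_left mult_ac)

lemma kth_ge: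
  assumes d1: "d \<ge> 1" and c: "d \<le> card {i. i < length ws \<and> d \<le> ws ! i}"
  shows "d \<le> kth_largest ws (d::nat)"
proof -
  define xs where "xs = sort ws"
  define m where "m = length ws"
  have lx: "length xs = m" by (simp add: xs_def m_def)
  have "card {i. i < length xs \<and> d \<le> xs ! i} = length (filter (\<lambda>w. d \<le> w) xs)"
    by (simp add: length_filter_conv_card)
  also have "\<dots> = length (filter (\<lambda>w. d \<le> w) ws)" by (simp add: xs_def filter_sort)
  also have "\<dots> = card {i. i < length ws \<and> d \<le> ws ! i}" by (simp add: length_filter_conv_card)
  finally have cx: "d \<le> card {i. i < m \<and> d \<le> xs ! i}" using c lx by simp
  have "card {i. i < m \<and> d \<le> xs ! i} \<le> card {..<m}" by (rule card_mono) auto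
  then have dm: "d \<le> m" using cx by simp
  have kth: "kth_largest ws d = xs ! (m - d)"
    using dm d1 by (simp add: kth_largest_def xs_def m_def rev_nth Suc_diff_le)
  show ?thesis
  proof (rule ccontr)
    assume "\<not> d \<le> kth_largest ws d"
    then have lt: "xs ! (m - d) < d" by (simp add: kth)
    have "{i. i < m \<and> d \<le> xs ! i} \<subseteq> {m - d + 1..<m}"
    proof
      fix i assume i: "i \<in> {i. i < m \<and> d \<le> xs ! i}"
      have "\<not> i \<le> m - d"
      proof
        assume "i \<le> m - d"
        then have "xs ! i \<le> xs ! (m - d)" using sorted_nth_mono[of xs i "m - d"] dm d1 lx
          by (simp add: xs_def)
        with i lt show False by simp
      qed
      with i show "i \<in> {m - d + 1..<m}" by simp
    qed
    then have "card {i. i < m \<and> d \<le> xs ! i} \<le> card {m - d + 1..<m}" by (rule card_mono[rotated]) simp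
    with cx dm d1 show False by simp
  qed
qed


lemma V_iso:
  assumes p: "qubit_perm n \<pi>" and cl: "\<forall>k<n. clifford1 (U k)" and s: "supp n \<psi>"
  shows "qinner n (local_op n U (perm_state \<pi> \<phi>)) (local_op n U (perm_state \<pi> \<psi>)) = qinner n \<phi> \<psi>"
proof -
  have uni: "\<And>k. k < n \<Longrightarrow> mmul2 (adj2 (U k)) (U k) = id2"
    using cl unitary_left by (simp add: clifford1_def unitary2_def)
  show ?thesis using s
    by (simp add: local_op_isometry[OF uni] perm_supp[OF p] perm_isometry[OF p])
qed

lemma two_elems:
  assumes "2 \<le> card C" shows "\<exists>a1 a2. a1 \<in> C \<and> a2 \<in> C \<and> a1 \<noteq> a2"
proof -
  have f: "finite C" using assms by (metis card.infinite not_numeral_le_zero)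
  have "C \<noteq> {}" using assms by auto
  then obtain a1 where a1: "a1 \<in> C" by blast
  have "card (C - {a1}) = card C - 1" using a1 f by simp
  moreover have "card C - 1 \<ge> 1" using assms by linarith
  ultimately have "card (C - {a1}) \<noteq> 0" by linarith
  then have "C - {a1} \<noteq> {}" by (intro notI) simp
  then obtain a2 where "a2 \<in> C - {a1}" by blast
  then show ?thesis using a1 by blast
qed

theorem theorem3:
  fixes n :: nat and R R' :: "nat \<Rightarrow> nat \<Rightarrow> bool" and s s' :: state and C C' :: "bits set"
  assumes "simple_graph n R" and "is_graph_state n R s"
    and "C \<subseteq> bitstrs n" and "card C \<ge> 2"
    and "simple_graph n R'" and "is_graph_state n R' s'"
    and "C' \<subseteq> bitstrs n"
    and "lc_equiv n (cws_code n s C) (cws_code n s' C')"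
  shows "qdistance n (cws_code n s C) \<le>
    kth_largest (map (\<lambda>i. pweight n (unitv i) (adjrow n R' i)) [0..<n])
                (qdistance n (cws_code n s C))"
proof -
  let ?Q = "cws_code n s C" and ?Q' = "cws_code n s' C'" and ?d = "qdistance n (cws_code n s C)"
  note g = assms(2) and g' = assms(6)
  from assms(8) obtain \<pi> U where p: "qubit_perm n \<pi>" and cl: "\<forall>k<n. clifford1 (U k)"
    and Qe: "?Q' = (\<lambda>\<psi>. local_op n U (perm_state \<pi> \<psi>)) ` ?Q"
    unfolding lc_equiv_def by blast
  have finC: "finite C" using assms(3) finite_bitstrs finite_subset by blast
  have finC': "finite C'" using assms(7) finite_bitstrs finite_subset by blast
  have Qs: "\<And>\<psi>. \<psi> \<in> ?Q \<Longrightarrow> supp n \<psi>" using code_supp[OF g] by blast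
  have pull: "?d \<le> pweight n v' u'"
    if v': "v' \<in> bitstrs n" and u': "u' \<in> bitstrs n" and nd: "\<not> detectable n ?Q' (pauli n v' u')" for v' u'
  proof -
    have nd': "\<not> detectable n ((\<lambda>\<psi>. local_op n U (perm_state \<pi> \<psi>)) ` ?Q) (pauli n v' u')"
      using nd Qe by simp
    from full_pull[where Q="?Q", OF p cl v' u' Qs nd'] obtain v u where
      "v \<in> bitstrs n" "u \<in> bitstrs n" "pweight n v u = pweight n v' u'" "\<not> detectable n ?Q (pauli n v u)"
      by blast
    then show ?thesis unfolding qdistance_def by (intro Least_le) blast
  qed
  have N: "qinner n s s \<noteq> 0" by (rule gs_norm_nz[OF g])
  have N': "qinner n s' s' \<noteq> 0" by (rule gs_norm_nz[OF g'])
  have "\<exists>c1 c2. c1 \<in> C' \<and> c2 \<in> C' \<and> c1 \<noteq> c2"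
  proof (rule ccontr)
    assume no: "\<not> (\<exists>c1 c2. c1 \<in> C' \<and> c2 \<in> C' \<and> c1 \<noteq> c2)"
    obtain a1 a2 where a: "a1 \<in> C" "a2 \<in> C" "a1 \<noteq> a2" using two_elems[OF assms(4)] by blast
    have aB: "a1 \<in> bitstrs n" "a2 \<in> bitstrs n" using a assms(3) by auto
    define V where "V = (\<lambda>\<psi>. local_op n U (perm_state \<pi> \<psi>))"
    define c0 where "c0 = (SOME c. c \<in> C')"
    define w where "w = pauli n zerov c0 s'"
    have sub: "C' \<subseteq> {c0}"
    proof
      fix c assume c: "c \<in> C'"
      then have "c0 \<in> C'" unfolding c0_def by (rule someI[where P="\<lambda>c. c \<in> C'"])
      with c no show "c \<in> {c0}" by blast
    qed
    have rep: "\<exists>\<beta>. \<psi>' = (\<lambda>x. \<beta> * w x)" if "\<psi>' \<in> ?Q'" for \<psi>'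
    proof -
      from that obtain a where a: "\<psi>' = (\<lambda>x. \<Sum>c\<in>C'. a c * pauli n zerov c s' x)"
        by (auto simp: cws_code_def)
      show ?thesis
      proof (cases "C' = {}")
        case True
        then show ?thesis using a by (intro exI[where x=0]) simp
      next
        case False
        with sub have "C' = {c0}" by blast
        then show ?thesis using a by (intro exI[where x="a c0"]) (simp add: w_def)
      qed
    qed
    have inQ: "pauli n zerov a1 s \<in> ?Q" "pauli n zerov a2 s \<in> ?Q"
      using z_in_code[OF finC] a by auto
    have sa: "supp n (pauli n zerov a1 s)" "supp n (pauli n zerov a2 s)" using Qs inQ by auto
    have "V (pauli n zerov a1 s) \<in> ?Q'" "V (pauli n zerov a2 s) \<in> ?Q'"
      using inQ by (simp_all add: Qe V_def)
    then obtain b1 b2 where b: "V (pauli n zerov a1 s) = (\<lambda>x. b1 * w x)" "V (pauli n zerov a2 s) = (\<lambda>x. b2 * w x)"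
      using rep by metis
    have iso: "qinner n (V (pauli n zerov ai s)) (V (pauli n zerov aj s)) = qinner n (pauli n zerov ai s) (pauli n zerov aj s)"
      if "supp n (pauli n zerov aj s)" for ai aj
      unfolding V_def by (rule V_iso[OF p cl that])
    have e11: "cnj b1 * (b1 * qinner n w w) = qinner n s s"
      using iso[OF sa(1), of a1] b z_inner[OF g aB(1) aB(1)] by (simp add: qinner_smul qinner_smul1 mult_ac)
    have e22: "cnj b2 * (b2 * qinner n w w) = qinner n s s"
      using iso[OF sa(2), of a2] b z_inner[OF g aB(2) aB(2)] by (simp add: qinner_smul qinner_smul1 mult_ac)
    have e12: "cnj b1 * (b2 * qinner n w w) = 0"
      using iso[OF sa(2), of a1] b z_inner[OF g aB(1) aB(2)] a(3) by (simp add: qinner_smul qinner_smul1 mult_ac)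
    from e11 N have "cnj b1 \<noteq> 0" "qinner n w w \<noteq> 0" by auto
    moreover from e22 N have "b2 \<noteq> 0" by auto
    ultimately show False using e12 by simp
  qed
  then obtain c1 c2 where c12: "c1 \<in> C'" "c2 \<in> C'" "c1 \<noteq> c2" by blast
  have cB: "c1 \<in> bitstrs n" "c2 \<in> bitstrs n" using c12 assms(7) by auto
  have z1: "pauli n zerov c1 s' \<in> ?Q'" and z2: "pauli n zerov c2 s' \<in> ?Q'"
    using z_in_code[OF finC'] c12 by auto
  define wt where "wt = (\<lambda>i. pweight n (unitv i) (adjrow n R' i))"
  define T where "T = {i. i < n \<and> ?d \<le> wt i}"
  have finT: "finite T" unfolding T_def by simp
  have sig: "C0 = (if c i then -1 else 1)"
    if i: "i < n" and c: "c \<in> C'" and det: "\<And>\<phi> \<psi>. \<phi> \<in> ?Q' \<Longrightarrow> \<psi> \<in> ?Q' \<Longrightarrow>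
        qinner n \<phi> (graph_stab n R' i \<psi>) = C0 * qinner n \<phi> \<psi>" for i c C0
  proof -
    have cb: "c \<in> bitstrs n" using c assms(7) by auto
    have zc: "pauli n zerov c s' \<in> ?Q'" using z_in_code[OF finC' c] .
    have "(if c i then -1 else 1) * qinner n s' s' = C0 * qinner n s' s'"
      using det[OF zc zc] by (simp add: stab_z[OF g' i] qinner_smul z_inner[OF g' cb cb])
    with N' show ?thesis by simp
  qed
  have eqc: "c1 i = c2 i" if i: "i < n" and nT: "i \<notin> T" for i
  proof -
    have "wt i < ?d" using nT i by (simp add: T_def)
    then have "detectable n ?Q' (graph_stab n R' i)"
      using pull[OF unitv_in[OF i] adjrow_in[of n R' i]] unfolding graph_stab_def wt_def by linarith
    then obtain C0 where det: "\<And>\<phi> \<psi>. \<phi> \<in> ?Q' \<Longrightarrow> \<psi> \<in> ?Q' \<Longrightarrow>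
        qinner n \<phi> (graph_stab n R' i \<psi>) = C0 * qinner n \<phi> \<psi>"
      by (auto simp: detectable_def)
    have "(if c1 i then -1 else (1::complex)) = (if c2 i then -1 else 1)"
      using sig[OF i c12(1) det] sig[OF i c12(2) det] by simp
    then show ?thesis by (auto split: if_splits)
  qed
  have cardT: "?d \<le> card T"
  proof -
    define w where "w = bxor c1 c2"
    have wB: "w \<in> bitstrs n" unfolding w_def using cB by (rule bxor_in)
    have Zz: "pauli n zerov w (pauli n zerov c1 s') = pauli n zerov c2 s'"
    proof
      fix x
      have "(-1::complex) ^ bdot n w x * ((-1) ^ bdot n c1 x * s' x) =
          ((-1) ^ bdot n c1 x * (-1) ^ bdot n c1 x) * ((-1) ^ bdot n c2 x * s' x)"
        by (simp add: w_def bdot_bxor1 mult_ac)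
      then show "pauli n zerov w (pauli n zerov c1 s') x = pauli n zerov c2 s' x"
        by (simp add: zst_apply sq_sign)
    qed
    have "\<not> detectable n ?Q' (pauli n zerov w)"
    proof
      assume "detectable n ?Q' (pauli n zerov w)"
      then obtain C0 where det: "\<And>\<phi> \<psi>. \<phi> \<in> ?Q' \<Longrightarrow> \<psi> \<in> ?Q' \<Longrightarrow>
        qinner n \<phi> (pauli n zerov w \<psi>) = C0 * qinner n \<phi> \<psi>"
        by (auto simp: detectable_def)
      have "qinner n s' s' = 0"
        using det[OF z2 z1] c12(3) by (simp add: Zz z_inner[OF g' cB(2) cB(2)] z_inner[OF g' cB(2) cB(1)])
      with N' show False by simp
    qed
    then have "?d \<le> pweight n zerov w" using pull[OF zerov_in wB] by blast
    also have "pweight n zerov w \<le> card T"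
      unfolding pweight_def
    proof (rule card_mono[OF finT])
      show "{k. k < n \<and> (zerov k \<or> w k)} \<subseteq> T"
        using eqc by (auto simp: zerov_def w_def bxor_def)
    qed
    finally show ?thesis .
  qed
  show ?thesis
  proof (cases "?d = 0")
    case True then show ?thesis by simp
  next
    case False
    have "{i. i < length (map wt [0..<n]) \<and> ?d \<le> map wt [0..<n] ! i} = T"
      by (auto simp: T_def)
    then have "?d \<le> kth_largest (map wt [0..<n]) ?d"
      using False cardT by (intro kth_ge) simp_all
    then show ?thesis by (simp add: wt_def)
  qed
qed

end
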